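(* Let $M$ be a connected topological manifold, $\Gamma$ a simple graph, and $H$ a complete subgraph of $\Gamma$. Then the map $\pi_\Gamma^H:\mathrm{Conf}_{\Gamma}(M)\to\mathrm{Conf}_{H}(M)$ is a (locally trivial) bundle projection.
   Context: For a graph $G$, $\mathrm{Conf}_{G}(M)=\{(x_v)_{v\in V(G)}\in M^{V(G)}: x_u\neq x_v\text{ whenever }\{u,v\}\in E(G)\}$. A complete subgraph $H$ of $\Gamma$ is a subgraph in which any two vertices are adjacent. The map $\pi_\Gamma^H$ sends $(x_v)_{v\in V(\Gamma)}$ to $(x_v)_{v\in V(H)}$ (forgetting the coordinates indexed by vertices not in $H$). *)

theory Defs
  imports "HOL-Analysis.Analysis"
begin

definition topological_manifold :: "'a topology \<Rightarrow> bool" where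
  "topological_manifold M \<longleftrightarrow> Hausdorff_space M \<and> second_countable M \<and>
     (\<exists>n. \<forall>x\<in>topspace M. \<exists>U. openin M U \<and> x \<in> U \<and>
        (\<exists>W. openin (Euclidean_space n) W \<and>
             subtopology M U homeomorphic_space subtopology (Euclidean_space n) W))"

definition simple_graph :: "'v set \<Rightarrow> 'v set set \<Rightarrow> bool" where
  "simple_graph V E \<longleftrightarrow> finite V \<and> E \<subseteq> {{u, v} | u v. u \<in> V \<and> v \<in> V \<and> u \<noteq> v}"

definition subgraph :: "'v set \<Rightarrow> 'v set set \<Rightarrow> 'v set \<Rightarrow> 'v set set \<Rightarrow> bool" where
  "subgraph W F V E \<longleftrightarrow> W \<subseteq> V \<and> F \<subseteq> E \<and> (\<forall>e\<in>F. e \<subseteq> W)"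

definition complete_subgraph :: "'v set \<Rightarrow> 'v set set \<Rightarrow> 'v set \<Rightarrow> 'v set set \<Rightarrow> bool" where
  "complete_subgraph W F V E \<longleftrightarrow> subgraph W F V E \<and>
     (\<forall>u\<in>W. \<forall>v\<in>W. u \<noteq> v \<longrightarrow> {u, v} \<in> F)"

definition Conf :: "'v set \<Rightarrow> 'v set set \<Rightarrow> 'a topology \<Rightarrow> ('v \<Rightarrow> 'a) topology" where
  "Conf V E M = subtopology (product_topology (\<lambda>_. M) V)
     {x \<in> topspace (product_topology (\<lambda>_. M) V). \<forall>u v. {u, v} \<in> E \<longrightarrow> x u \<noteq> x v}"

definition locally_trivial_bundle :: "'e topology \<Rightarrow> 'b topology \<Rightarrow> ('e \<Rightarrow> 'b) \<Rightarrow> bool" where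
  "locally_trivial_bundle E B p \<longleftrightarrow> continuous_map E B p \<and>
     (\<forall>b\<in>topspace B. \<exists>U. openin B U \<and> b \<in> U \<and>
        (\<exists>(F :: 'e topology) \<phi>.
           homeomorphic_map (subtopology E {e \<in> topspace E. p e \<in> U})
                            (prod_topology (subtopology B U) F) \<phi> \<and>
           (\<forall>e\<in>topspace E. p e \<in> U \<longrightarrow> fst (\<phi> e) = p e)))"

end

theory Submission
  imports Defs
begin

primrec nrm :: "nat \<Rightarrow> (nat \<Rightarrow> real) \<Rightarrow> real" where
  "nrm 0 v = 0" | "nrm (Suc n) v = max (nrm n v) \<bar>v n\<bar>"

definition rho :: "real \<Rightarrow> real \<Rightarrow> real" where
  "rho s x = max ((x - s) / (1 - s)) ((s - x) / (1 + s))"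

primrec mu :: "nat \<Rightarrow> (nat \<Rightarrow> real) \<Rightarrow> (nat \<Rightarrow> real) \<Rightarrow> real" where
  "mu 0 a u = 0" | "mu (Suc n) a u = max (mu n a u) (rho (a n) (u n))"

lemma nrm_ge0: "0 \<le> nrm n v" by (induction n) auto
lemma nrm_ge: "i < n \<Longrightarrow> \<bar>v i\<bar> \<le> nrm n v"
  by (induction n) (auto simp: less_Suc_eq)
lemma nrm_le: "(\<And>i. i < n \<Longrightarrow> \<bar>v i\<bar> \<le> t) \<Longrightarrow> 0 \<le> t \<Longrightarrow> nrm n v \<le> t"
  by (induction n) auto
lemma nrm_att: "nrm n v = 0 \<or> (\<exists>i<n. \<bar>v i\<bar> = nrm n v)"
  by (induction n) (auto simp: max_def less_Suc_eq)
lemma nrm_cong: "(\<And>i. i < n \<Longrightarrow> v i = w i) \<Longrightarrow> nrm n v = nrm n w"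
  by (induction n) auto

lemma mu_ge0: "0 \<le> mu n a u" by (induction n) auto
lemma mu_ge: "i < n \<Longrightarrow> rho (a i) (u i) \<le> mu n a u"
  by (induction n) (auto simp: less_Suc_eq)
lemma mu_le: "(\<And>i. i < n \<Longrightarrow> rho (a i) (u i) \<le> t) \<Longrightarrow> 0 \<le> t \<Longrightarrow> mu n a u \<le> t"
  by (induction n) auto
lemma mu_att: "mu n a u = 0 \<or> (\<exists>i<n. rho (a i) (u i) = mu n a u)"
  by (induction n) (auto simp: max_def less_Suc_eq)

lemma rho_le: assumes "\<bar>s\<bar> < 1" "\<bar>x\<bar> \<le> t" shows "rho s (x + (1 - t) * s) \<le> t"
proof -
  have a: "(x + (1 - t) * s - s) / (1 - s) \<le> t" using assms by (auto simp: divide_simps abs_le_iff abs_less_iff algebra_simps)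
  have b: "(s - (x + (1 - t) * s)) / (1 + s) \<le> t" using assms by (auto simp: divide_simps abs_le_iff abs_less_iff algebra_simps)
  show ?thesis using a b by (simp add: rho_def)
qed

lemma rho_ge: assumes "\<bar>s\<bar> < 1" "\<bar>x\<bar> = t" shows "t \<le> rho s (x + (1 - t) * s)"
proof (cases "x \<ge> 0")
  case True
  have "t \<le> (x + (1 - t) * s - s) / (1 - s)" using assms True by (auto simp: divide_simps abs_le_iff abs_less_iff algebra_simps)
  then show ?thesis by (simp add: rho_def)
next
  case False
  have "t \<le> (s - (x + (1 - t) * s)) / (1 + s)" using assms False by (auto simp: divide_simps abs_le_iff abs_less_iff algebra_simps)
  then show ?thesis by (simp add: rho_def)
qed

lemma rho_ge1: assumes "\<bar>s\<bar> < 1" "1 \<le> \<bar>x\<bar>" shows "1 \<le> rho s x"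
proof (cases "x \<ge> 0")
  case True
  have "1 \<le> (x - s) / (1 - s)" using assms True by (auto simp: divide_simps abs_le_iff abs_less_iff algebra_simps)
  then show ?thesis by (simp add: rho_def)
next
  case False
  have "1 \<le> (s - x) / (1 + s)" using assms False by (auto simp: divide_simps abs_le_iff abs_less_iff algebra_simps)
  then show ?thesis by (simp add: rho_def)
qed

lemma rho_ge1': assumes "\<bar>s\<bar> < 1" "1 \<le> rho s x" shows "1 \<le> \<bar>x\<bar>"
proof -
  have "1 \<le> (x - s) / (1 - s) \<or> 1 \<le> (s - x) / (1 + s)" using assms by (auto simp: rho_def max_def split: if_splits)
  then show ?thesis using assms by (auto simp: divide_simps abs_if split: if_splits)
qed

lemma rho_inv_le: assumes "\<bar>s\<bar> < 1" "rho s u \<le> m" shows "\<bar>u - (1 - m) * s\<bar> \<le> m"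
proof -
  have "(u - s) / (1 - s) \<le> m" "(s - u) / (1 + s) \<le> m" using assms by (auto simp: rho_def)
  then show ?thesis using assms by (auto simp: divide_simps abs_if algebra_simps split: if_splits)
qed

lemma rho_inv_ge: assumes "\<bar>s\<bar> < 1" "rho s u = m" shows "m \<le> \<bar>u - (1 - m) * s\<bar>"
proof -
  have "(u - s) / (1 - s) = m \<or> (s - u) / (1 + s) = m" using assms by (auto simp: rho_def max_def)
  then show ?thesis using assms by (auto simp: divide_simps abs_if algebra_simps split: if_splits)
qed

definition hmap :: "nat \<Rightarrow> (nat \<Rightarrow> real) \<Rightarrow> (nat \<Rightarrow> real) \<Rightarrow> (nat \<Rightarrow> real)" where
  "hmap n a w = (\<lambda>i. w i + max 0 (1 - nrm n w) * a i)"
definition kmap :: "nat \<Rightarrow> (nat \<Rightarrow> real) \<Rightarrow> (nat \<Rightarrow> real) \<Rightarrow> (nat \<Rightarrow> real)" where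
  "kmap n a u = (\<lambda>i. u i - max 0 (1 - mu n a u) * a i)"

lemma a_lt1: "nrm n a < 1 \<Longrightarrow> i < n \<Longrightarrow> \<bar>a i\<bar> < 1"
  using nrm_ge[of i n a] by linarith

lemma big_mu: assumes "nrm n a < 1" "1 \<le> nrm n w" shows "1 \<le> mu n a w"
proof -
  obtain i where i: "i < n" "\<bar>w i\<bar> = nrm n w" using nrm_att[of n w] assms by auto
  have "1 \<le> rho (a i) (w i)" using rho_ge1[of "a i" "w i"] a_lt1[OF assms(1) i(1)] i assms by simp
  then show ?thesis using mu_ge[OF i(1), of a w] by linarith
qed

lemma big_mu': assumes "nrm n a < 1" "1 \<le> mu n a u" shows "1 \<le> nrm n u"
proof -
  obtain i where i: "i < n" "rho (a i) (u i) = mu n a u" using mu_att[of n a u] assms by auto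
  have "1 \<le> \<bar>u i\<bar>" using rho_ge1'[of "a i" "u i"] a_lt1[OF assms(1) i(1)] i assms by simp
  then show ?thesis using nrm_ge[OF i(1), of u] by linarith
qed

lemma F1: assumes a: "nrm n a < 1"
  shows "max 0 (1 - mu n a (hmap n a w)) = max 0 (1 - nrm n w)"
proof (cases "nrm n w \<le> 1")
  case True
  define t where "t = nrm n w"
  have h: "hmap n a w i = w i + (1 - t) * a i" for i using True by (simp add: hmap_def t_def)
  have le: "mu n a (hmap n a w) \<le> t"
  proof (rule mu_le)
    fix i assume i: "i < n"
    show "rho (a i) (hmap n a w i) \<le> t" unfolding h
      by (rule rho_le[OF a_lt1[OF a i]]) (simp add: t_def nrm_ge[OF i])
  qed (simp add: t_def nrm_ge0)
  have ge: "t \<le> mu n a (hmap n a w)"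
  proof (cases "t = 0")
    case True then show ?thesis using mu_ge0 by simp
  next
    case False
    then obtain i where i: "i < n" "\<bar>w i\<bar> = t" using nrm_att[of n w] by (auto simp: t_def)
    have "t \<le> rho (a i) (hmap n a w i)" unfolding h by (rule rho_ge[OF a_lt1[OF a i(1)] i(2)])
    then show ?thesis using mu_ge[OF i(1)] by (meson order_trans)
  qed
  show ?thesis using le ge t_def by simp
next
  case False
  then have "hmap n a w = w" by (simp add: hmap_def)
  then show ?thesis using big_mu[OF a] False by simp
qed

lemma F2: assumes a: "nrm n a < 1"
  shows "max 0 (1 - nrm n (kmap n a u)) = max 0 (1 - mu n a u)"
proof (cases "mu n a u \<le> 1")
  case True
  define m where "m = mu n a u"
  have h: "kmap n a u i = u i - (1 - m) * a i" for i using True by (simp add: kmap_def m_def)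
  have le: "nrm n (kmap n a u) \<le> m"
  proof (rule nrm_le)
    fix i assume i: "i < n"
    show "\<bar>kmap n a u i\<bar> \<le> m" unfolding h
      by (rule rho_inv_le[OF a_lt1[OF a i]]) (simp add: m_def mu_ge[OF i])
  qed (simp add: m_def mu_ge0)
  have ge: "m \<le> nrm n (kmap n a u)"
  proof (cases "m = 0")
    case True then show ?thesis using nrm_ge0 by simp
  next
    case False
    then obtain i where i: "i < n" "rho (a i) (u i) = m" using mu_att[of n a u] by (auto simp: m_def)
    have "m \<le> \<bar>kmap n a u i\<bar>" unfolding h by (rule rho_inv_ge[OF a_lt1[OF a i(1)] i(2)])
    then show ?thesis using nrm_ge[OF i(1)] by (meson order_trans)
  qed
  show ?thesis using le ge m_def by simp
next
  case False
  then have "kmap n a u = u" by (simp add: kmap_def)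
  then show ?thesis using big_mu'[OF a] False by simp
qed

lemma kh: assumes a: "nrm n a < 1" shows "kmap n a (hmap n a w) = w"
proof -
  have "kmap n a (hmap n a w) = (\<lambda>i. hmap n a w i - max 0 (1 - nrm n w) * a i)"
    by (simp add: kmap_def F1[OF a])
  also have "\<dots> = w" by (simp add: hmap_def)
  finally show ?thesis .
qed

lemma hk: assumes a: "nrm n a < 1" shows "hmap n a (kmap n a u) = u"
proof -
  have "hmap n a (kmap n a u) = (\<lambda>i. kmap n a u i + max 0 (1 - mu n a u) * a i)"
    by (simp add: hmap_def F2[OF a])
  also have "\<dots> = u" by (simp add: kmap_def)
  finally show ?thesis .
qed

lemma h_out: "1 < nrm n w \<Longrightarrow> hmap n a w = w"
  by (simp add: hmap_def)

lemma k_out: "nrm n a < 1 \<Longrightarrow> 1 < nrm n u \<Longrightarrow> kmap n a u = u"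
  using big_mu[of n a u] by (simp add: kmap_def)

lemma h_in: assumes a: "nrm n a < 1" and w: "nrm n w \<le> 1" shows "nrm n (hmap n a w) \<le> 1"
proof (rule nrm_le)
  fix i assume i: "i < n"
  have "\<bar>w i\<bar> \<le> nrm n w" "\<bar>a i\<bar> \<le> 1" using nrm_ge[OF i] a_lt1[OF a i] by auto
  moreover have "\<bar>(1 - nrm n w) * a i\<bar> \<le> (1 - nrm n w) * 1"
    using w \<open>\<bar>a i\<bar> \<le> 1\<close> by (simp add: abs_mult mult_left_le)
  ultimately have "\<bar>w i + (1 - nrm n w) * a i\<bar> \<le> nrm n w + (1 - nrm n w) * 1"
    using abs_triangle_ineq[of "w i" "(1 - nrm n w) * a i"] by linarith
  then show "\<bar>hmap n a w i\<bar> \<le> 1" using w by (simp add: hmap_def)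
qed simp

lemma k_in: assumes a: "nrm n a < 1" and u: "nrm n u \<le> 1" shows "nrm n (kmap n a u) \<le> 1"
proof (cases "1 \<le> mu n a u")
  case True
  then show ?thesis using u by (simp add: kmap_def)
next
  case False
  then show ?thesis using F2[OF a, of u] by (simp add: max_def split: if_splits)
qed

lemma h0: "hmap n a (\<lambda>i. 0) = a"
proof -
  have "nrm n (\<lambda>i. 0) = 0" by (induction n) auto
  then show ?thesis by (simp add: hmap_def)
qed


lemma cont_nrm:
  assumes "\<And>j. continuous_map X euclideanreal (\<lambda>x. F x j)"
  shows "continuous_map X euclideanreal (\<lambda>x. nrm n (F x))"
  by (induction n) (auto intro!: continuous_intros assms)

lemma cont_rho:
  assumes "continuous_map X euclideanreal f" "continuous_map X euclideanreal g"
    "\<And>x. x \<in> topspace X \<Longrightarrow> \<bar>f x\<bar> < 1"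
  shows "continuous_map X euclideanreal (\<lambda>x. rho (f x) (g x))"
  unfolding rho_def
proof (intro continuous_intros assms)
  show "1 - f x \<noteq> 0" "1 + f x \<noteq> 0" if "x \<in> topspace X" for x
    using assms(3)[OF that] by auto
qed auto

lemma cont_mu:
  assumes "\<And>j. continuous_map X euclideanreal (\<lambda>x. A x j)"
    "\<And>j. continuous_map X euclideanreal (\<lambda>x. U x j)"
    "\<And>x j. x \<in> topspace X \<Longrightarrow> j < n \<Longrightarrow> \<bar>A x j\<bar> < 1"
  shows "continuous_map X euclideanreal (\<lambda>x. mu n (A x) (U x))"
  using assms(3)
proof (induction n)
  case 0 then show ?case by simp
next
  case (Suc n)
  have "continuous_map X euclideanreal (\<lambda>x. rho (A x n) (U x n))"
    by (rule cont_rho) (auto intro: assms Suc.prems)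
  moreover have "continuous_map X euclideanreal (\<lambda>x. mu n (A x) (U x))"
    using Suc by auto
  ultimately show ?case by (auto intro!: continuous_intros)
qed

definition Hm :: "nat \<Rightarrow> (nat \<Rightarrow> real) \<Rightarrow> real \<Rightarrow> (nat \<Rightarrow> real) \<Rightarrow> (nat \<Rightarrow> real) \<Rightarrow> (nat \<Rightarrow> real)" where
  "Hm n c r z v = (\<lambda>i. c i + r * hmap n (\<lambda>j. (z j - c j) / r) (\<lambda>j. (v j - c j) / r) i)"
definition Km :: "nat \<Rightarrow> (nat \<Rightarrow> real) \<Rightarrow> real \<Rightarrow> (nat \<Rightarrow> real) \<Rightarrow> (nat \<Rightarrow> real) \<Rightarrow> (nat \<Rightarrow> real)" where
  "Km n c r z v = (\<lambda>i. c i + r * kmap n (\<lambda>j. (z j - c j) / r) (\<lambda>j. (v j - c j) / r) i)"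

definition dist_ok :: "nat \<Rightarrow> (nat \<Rightarrow> real) \<Rightarrow> real \<Rightarrow> (nat \<Rightarrow> real) \<Rightarrow> bool" where
  "dist_ok n c r z \<longleftrightarrow> nrm n (\<lambda>j. (z j - c j) / r) < 1"

lemma Hm_scaled: "r > 0 \<Longrightarrow> (\<lambda>j. (Hm n c r z v j - c j) / r) = hmap n (\<lambda>j. (z j - c j) / r) (\<lambda>j. (v j - c j) / r)"
  by (simp add: Hm_def)
lemma Km_scaled: "r > 0 \<Longrightarrow> (\<lambda>j. (Km n c r z v j - c j) / r) = kmap n (\<lambda>j. (z j - c j) / r) (\<lambda>j. (v j - c j) / r)"
  by (simp add: Km_def)

lemma KmHm: assumes "r > 0" "dist_ok n c r z" shows "Km n c r z (Hm n c r z v) = v"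
proof -
  have "Km n c r z (Hm n c r z v) = (\<lambda>i. c i + r * ((v i - c i) / r))"
    unfolding Km_def Hm_scaled[OF assms(1)] kh[OF assms(2)[unfolded dist_ok_def]] ..
  then show ?thesis using assms by simp
qed

lemma HmKm: assumes "r > 0" "dist_ok n c r z" shows "Hm n c r z (Km n c r z v) = v"
proof -
  have "Hm n c r z (Km n c r z v) = (\<lambda>i. c i + r * ((v i - c i) / r))"
    unfolding Hm_def Km_scaled[OF assms(1)] hk[OF assms(2)[unfolded dist_ok_def]] ..
  then show ?thesis using assms by simp
qed

lemma Hm_c: assumes "r > 0" shows "Hm n c r z c = z"
proof -
  have "(\<lambda>j. (c j - c j) / r) = (\<lambda>j. 0)" by simp
  then show ?thesis using assms by (simp add: Hm_def h0)
qed

lemma Hm_out: "1 < nrm n (\<lambda>j. (v j - c j) / r) \<Longrightarrow> r > 0 \<Longrightarrow> Hm n c r z v = v"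
  by (simp add: Hm_def h_out)

lemma Km_out: "dist_ok n c r z \<Longrightarrow> 1 < nrm n (\<lambda>j. (v j - c j) / r) \<Longrightarrow> r > 0 \<Longrightarrow> Km n c r z v = v"
  by (simp add: Km_def k_out dist_ok_def)

lemma Hm_in: "dist_ok n c r z \<Longrightarrow> nrm n (\<lambda>j. (v j - c j) / r) \<le> 1 \<Longrightarrow> r > 0 \<Longrightarrow>
   nrm n (\<lambda>j. (Hm n c r z v j - c j) / r) \<le> 1"
  by (simp add: Hm_scaled h_in dist_ok_def)

lemma Km_in: "dist_ok n c r z \<Longrightarrow> nrm n (\<lambda>j. (v j - c j) / r) \<le> 1 \<Longrightarrow> r > 0 \<Longrightarrow>
   nrm n (\<lambda>j. (Km n c r z v j - c j) / r) \<le> 1"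
  by (simp add: Km_scaled k_in dist_ok_def)

lemma Hm_En: "\<forall>i\<ge>n. c i = 0 \<Longrightarrow> \<forall>i\<ge>n. z i = 0 \<Longrightarrow> \<forall>i\<ge>n. v i = 0 \<Longrightarrow> \<forall>i\<ge>n. Hm n c r z v i = 0"
  by (simp add: Hm_def hmap_def)
lemma Km_En: "\<forall>i\<ge>n. c i = 0 \<Longrightarrow> \<forall>i\<ge>n. z i = 0 \<Longrightarrow> \<forall>i\<ge>n. v i = 0 \<Longrightarrow> \<forall>i\<ge>n. Km n c r z v i = 0"
  by (simp add: Km_def kmap_def)

lemma cont_Hm:
  assumes "\<And>j. continuous_map X euclideanreal (\<lambda>x. Z x j)"
    "\<And>j. continuous_map X euclideanreal (\<lambda>x. V x j)"
    "r > 0"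
  shows "continuous_map X euclideanreal (\<lambda>x. Hm n c r (Z x) (V x) i)"
  unfolding Hm_def hmap_def
  using assms(3) by (intro continuous_intros cont_nrm assms) auto

lemma cont_Km:
  assumes "\<And>j. continuous_map X euclideanreal (\<lambda>x. Z x j)"
    "\<And>j. continuous_map X euclideanreal (\<lambda>x. V x j)"
    "\<And>x. x \<in> topspace X \<Longrightarrow> dist_ok n c r (Z x)" "r > 0"
  shows "continuous_map X euclideanreal (\<lambda>x. Km n c r (Z x) (V x) i)"
  unfolding Km_def kmap_def
proof (intro continuous_intros cont_mu assms)
  fix x j assume "x \<in> topspace X" "j < n"
  then show "\<bar>(Z x j - c j) / r\<bar> < 1"
    using assms(3) a_lt1 unfolding dist_ok_def by blast
qed (use assms(4) in auto)


lemma nrm_scaled_le: assumes "r > 0"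
  shows "nrm n (\<lambda>j. (v j - c j) / r) \<le> 1 \<longleftrightarrow> (\<forall>j<n. \<bar>v j - c j\<bar> \<le> r)"
proof
  assume L: "nrm n (\<lambda>j. (v j - c j) / r) \<le> 1"
  show "\<forall>j<n. \<bar>v j - c j\<bar> \<le> r"
  proof (intro allI impI)
    fix j assume "j < n"
    then have "\<bar>(v j - c j) / r\<bar> \<le> 1" using nrm_ge[of j n "\<lambda>j. (v j - c j) / r"] L by simp
    then show "\<bar>v j - c j\<bar> \<le> r" using assms by (simp add: abs_divide divide_le_eq)
  qed
next
  assume R: "\<forall>j<n. \<bar>v j - c j\<bar> \<le> r"
  show "nrm n (\<lambda>j. (v j - c j) / r) \<le> 1"
  proof (rule nrm_le)
    fix j assume "j < n"
    then have "\<bar>v j - c j\<bar> \<le> r" using R by blast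
    then show "\<bar>(v j - c j) / r\<bar> \<le> 1" using assms by (simp add: abs_divide divide_le_eq)
  qed simp
qed

definition cube :: "nat \<Rightarrow> (nat \<Rightarrow> real) \<Rightarrow> real \<Rightarrow> (nat \<Rightarrow> real) set" where
  "cube n c r = {v. (\<forall>i\<ge>n. v i = 0) \<and> nrm n (\<lambda>j. (v j - c j) / r) \<le> 1}"

lemma cube_PiE: assumes "r > 0" "\<forall>i\<ge>n. c i = 0"
  shows "cube n c r = PiE UNIV (\<lambda>i. if i < n then {c i - r..c i + r} else {0})"
proof (rule set_eqI)
  fix v
  have "v \<in> cube n c r \<longleftrightarrow> (\<forall>i\<ge>n. v i = 0) \<and> (\<forall>j<n. \<bar>v j - c j\<bar> \<le> r)"
    unfolding cube_def nrm_scaled_le[OF assms(1)] by simp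
  also have "\<dots> \<longleftrightarrow> (\<forall>i. v i \<in> (if i < n then {c i - r..c i + r} else {0}))"
    by (auto simp: abs_le_iff not_less)
  also have "\<dots> \<longleftrightarrow> v \<in> PiE UNIV (\<lambda>i. if i < n then {c i - r..c i + r} else {0})"
    by (simp add: PiE_iff)
  finally show "v \<in> cube n c r \<longleftrightarrow> v \<in> PiE UNIV (\<lambda>i. if i < n then {c i - r..c i + r} else {0})" .
qed

lemma compact_cube: assumes "r > 0" "\<forall>i\<ge>n. c i = 0"
  shows "compactin (Euclidean_space n) (cube n c r)"
proof -
  have "compactin (powertop_real UNIV) (cube n c r)"
    unfolding cube_PiE[OF assms] compactin_PiE by (simp add: compactin_euclidean_iff)
  moreover have "cube n c r \<subseteq> topspace (Euclidean_space n)"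
    by (auto simp: cube_def topspace_Euclidean_space)
  ultimately show ?thesis
    by (simp add: Euclidean_space_def compactin_subtopology topspace_Euclidean_space)
qed

lemma cube_in_open:
  assumes Op: "openin (Euclidean_space n) Op" and c: "c \<in> Op"
  obtains r where "r > 0" "cube n c r \<subseteq> Op"
proof -
  obtain T where T: "openin (powertop_real UNIV) T" "Op = T \<inter> {x. \<forall>i\<ge>n. x i = 0}"
    using Op by (auto simp: Euclidean_space_def openin_subtopology)
  have cT: "c \<in> T" and cE: "\<forall>i\<ge>n. c i = 0" using c T by auto
  obtain U where U: "finite {i. U i \<noteq> UNIV}" "\<And>i. open (U i)" "c \<in> PiE UNIV U" "PiE UNIV U \<subseteq> T"
    using T(1) cT unfolding openin_product_topology_alt by force
  define J where "J = {i. U i \<noteq> UNIV}"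
  have "\<forall>i\<in>J. \<exists>e>0. ball (c i) e \<subseteq> U i"
    using U(2,3) by (meson PiE_E UNIV_I open_contains_ball)
  then have "\<exists>e. \<forall>i\<in>J. e i > 0 \<and> ball (c i) (e i) \<subseteq> U i" by (rule bchoice)
  then obtain e where e: "\<And>i. i \<in> J \<Longrightarrow> e i > 0 \<and> ball (c i) (e i) \<subseteq> U i"
    by blast
  define r where "r = Min (insert 1 (e ` J)) / 2"
  have fin: "finite (insert 1 (e ` J))" using U(1) J_def by simp
  have mpos: "Min (insert 1 (e ` J)) > 0" using fin e by (auto simp: Min_gr_iff)
  then have rpos: "r > 0" by (simp add: r_def)
  have rle: "r < e i" if "i \<in> J" for i
  proof -
    have "Min (insert 1 (e ` J)) \<le> e i" using fin that by (auto intro: Min_le)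
    then show ?thesis using mpos by (simp add: r_def)
  qed
  have "cube n c r \<subseteq> Op"
  proof
    fix v assume v: "v \<in> cube n c r"
    then have vE: "\<forall>i\<ge>n. v i = 0" and vc: "\<forall>j<n. \<bar>v j - c j\<bar> \<le> r"
      using nrm_scaled_le[OF rpos] by (auto simp: cube_def)
    have "v i \<in> U i" for i
    proof (cases "i \<in> J")
      case False then show ?thesis by (simp add: J_def)
    next
      case True
      show ?thesis
      proof (cases "i < n")
        case True
        have "\<bar>v i - c i\<bar> \<le> r" using vc True by blast
        then have "dist (c i) (v i) < e i" using rle[OF \<open>i \<in> J\<close>] by (simp add: dist_real_def abs_minus_commute)
        then show ?thesis using e[OF \<open>i \<in> J\<close>] by auto
      next
        case False
        then have "v i = c i" using vE cE by simp
        then show ?thesis using U(3) by auto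
      qed
    qed
    then have "v \<in> T" using U(4) by auto
    then show "v \<in> Op" using T(2) vE by simp
  qed
  then show ?thesis using rpos that by blast
qed


definition good_family :: "'a topology \<Rightarrow> 'a \<Rightarrow> 'a set \<Rightarrow> 'a set \<Rightarrow> 'a set \<Rightarrow> ('a \<Rightarrow> 'a \<Rightarrow> 'a) \<Rightarrow> ('a \<Rightarrow> 'a \<Rightarrow> 'a) \<Rightarrow> bool" where
  "good_family M x G N K th th' \<longleftrightarrow>
     openin M N \<and> x \<in> N \<and> closedin M K \<and> K \<subseteq> G \<and> x \<in> K \<and>
     (\<forall>y\<in>N. th y x = y) \<and>
     (\<forall>y\<in>N. \<forall>m\<in>topspace M. th y m \<in> topspace M \<and> th' y m \<in> topspace M \<and>
        th y (th' y m) = m \<and> th' y (th y m) = m \<and> (m \<notin> K \<longrightarrow> th y m = m \<and> th' y m = m)) \<and>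
     continuous_map (prod_topology (subtopology M N) M) M (\<lambda>p. th (fst p) (snd p)) \<and>
     continuous_map (prod_topology (subtopology M N) M) M (\<lambda>p. th' (fst p) (snd p))"

lemma key_family:
  fixes M :: "'a topology"
  assumes H: "Hausdorff_space M" and G: "openin M G" "x \<in> G"
    and U: "openin M U" "x \<in> U" and W': "openin (Euclidean_space n) W'"
    and hom: "homeomorphic_maps (subtopology M U) (subtopology (Euclidean_space n) W') f g"
  shows "\<exists>N K th th'. good_family M x G N K th th'"
proof -
  define En where "En = topspace (Euclidean_space n)"
  have W'E: "W' \<subseteq> En" using W' openin_subset En_def by blast
  have UM: "U \<subseteq> topspace M" using U openin_subset by blast
  have fc: "continuous_map (subtopology M U) (subtopology (Euclidean_space n) W') f"
   and gc: "continuous_map (subtopology (Euclidean_space n) W') (subtopology M U) g"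
   and gf: "\<And>m. m \<in> U \<Longrightarrow> g (f m) = m"
   and fg: "\<And>v. v \<in> W' \<Longrightarrow> f (g v) = v"
    using hom UM W'E unfolding homeomorphic_maps_def En_def by (auto simp: Int_absorb1 Int_absorb2)
  have fW: "f m \<in> W'" if "m \<in> U" for m
    using continuous_map_image_subset_topspace[OF fc] that UM by auto
  have gU: "g v \<in> U" if "v \<in> W'" for v
    using continuous_map_image_subset_topspace[OF gc] that W'E by (auto simp: En_def)
  have fE: "\<forall>i\<ge>n. f m i = 0" if "m \<in> U" for m
    using fW[OF that] W'E by (auto simp: En_def topspace_Euclidean_space)
  have fcoord: "continuous_map (subtopology M U) euclideanreal (\<lambda>m. f m j)" for j
  proof -
    have "continuous_map (subtopology M U) (powertop_real UNIV) f"
      using fc by (simp add: Euclidean_space_def continuous_map_in_subtopology subtopology_subtopology)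
    then show ?thesis by (simp add: continuous_map_componentwise_UNIV)
  qed
  define c where "c = f x"
  define O' where "O' = {v \<in> topspace (subtopology (Euclidean_space n) W'). g v \<in> G \<inter> U}"
  have "openin (subtopology M U) (G \<inter> U)" using G(1) by (simp add: openin_subtopology_Int)
  then have "openin (subtopology (Euclidean_space n) W') O'"
    unfolding O'_def by (rule openin_continuous_map_preimage[OF gc])
  then have O'open: "openin (Euclidean_space n) O'" using W' openin_trans_full by blast
  have cO': "c \<in> O'" using G U gf fW W'E by (auto simp: O'_def c_def En_def)
  obtain r where r: "r > 0" "cube n c r \<subseteq> O'" using cube_in_open[OF O'open cO'] by blast
  define C where "C = cube n c r"
  have CW: "C \<subseteq> W'" using r by (auto simp: C_def O'_def)
  have cE: "\<forall>i\<ge>n. c i = 0" using fE U by (simp add: c_def)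
  have cC: "c \<in> C"
  proof -
    have "nrm n (\<lambda>j. (c j - c j) / r) = 0" by (induction n) auto
    then show ?thesis using cE by (simp add: C_def cube_def)
  qed
  define K where "K = g ` C"
  have "compactin (subtopology (Euclidean_space n) W') C"
    using compact_cube[OF r(1) cE] CW by (simp add: compactin_subtopology C_def)
  then have "compactin (subtopology M U) K" unfolding K_def by (rule image_compactin[OF _ gc])
  then have "compactin M K" by (simp add: compactin_subtopology)
  then have Kc: "closedin M K" using H compactin_imp_closedin by blast
  have KG: "K \<subseteq> G" using r by (auto simp: K_def C_def O'_def)
  have KU: "K \<subseteq> U" using CW gU by (auto simp: K_def)
  have "g c = x" using U gf by (simp add: c_def)
  then have xK: "x \<in> K" using cC unfolding K_def by (metis image_eqI)
  define N where "N = {y \<in> topspace (subtopology M U). nrm n (\<lambda>j. (f y j - c j) / r) \<in> {..<1}}"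
  have "continuous_map (subtopology M U) euclideanreal (\<lambda>y. nrm n (\<lambda>j. (f y j - c j) / r))"
    by (intro cont_nrm continuous_intros fcoord) (use r in auto)
  then have "openin (subtopology M U) N" unfolding N_def
    by (rule openin_continuous_map_preimage) simp
  then have Nopen: "openin M N" using U openin_trans_full by blast
  have NU: "N \<subseteq> U" by (auto simp: N_def)
  have Nok: "dist_ok n c r (f y)" if "y \<in> N" for y using that by (simp add: N_def dist_ok_def)
  have xN: "x \<in> N"
  proof -
    have "nrm n (\<lambda>j. (c j - c j) / r) = 0" by (induction n) auto
    then show ?thesis using U UM by (auto simp: N_def c_def)
  qed
  have notC: "1 < nrm n (\<lambda>j. (v j - c j) / r)" if "v \<in> En" "v \<notin> C" for v
    using that by (auto simp: C_def cube_def En_def topspace_Euclidean_space)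
  have HW: "Hm n c r (f y) v \<in> W'" if "y \<in> N" "v \<in> W'" for y v
  proof (cases "v \<in> C")
    case True
    have "Hm n c r (f y) v \<in> C"
      using True Hm_in[OF Nok[OF that(1)] _ r(1)] Hm_En[OF cE fE] that NU W'E
      by (auto simp: C_def cube_def En_def topspace_Euclidean_space)
    then show ?thesis using CW by blast
  next
    case False
    have "v \<in> En" using that W'E by auto
    then have "Hm n c r (f y) v = v" using Hm_out[OF _ r(1)] notC False by blast
    then show ?thesis using that by simp
  qed
  have KW: "Km n c r (f y) v \<in> W'" if "y \<in> N" "v \<in> W'" for y v
  proof (cases "v \<in> C")
    case True
    have "Km n c r (f y) v \<in> C"
      using True Km_in[OF Nok[OF that(1)] _ r(1)] Km_En[OF cE fE] that NU W'E
      by (auto simp: C_def cube_def En_def topspace_Euclidean_space)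
    then show ?thesis using CW by blast
  next
    case False
    have "v \<in> En" using that W'E by auto
    then have "Km n c r (f y) v = v" using Km_out[OF Nok[OF that(1)] _ r(1)] notC False by blast
    then show ?thesis using that by simp
  qed
  define th where "th y m = (if m \<in> U then g (Hm n c r (f y) (f m)) else m)" for y m
  define th' where "th' y m = (if m \<in> U then g (Km n c r (f y) (f m)) else m)" for y m
  have th_out: "th y m = m \<and> th' y m = m" if "y \<in> N" "m \<notin> K" for y m
  proof (cases "m \<in> U")
    case True
    then have "f m \<notin> C" using that gf unfolding K_def by (metis image_eqI)
    moreover have "f m \<in> En" using fW[OF True] W'E by auto
    ultimately have "Hm n c r (f y) (f m) = f m" "Km n c r (f y) (f m) = f m"
      using Hm_out[OF _ r(1)] Km_out[OF Nok[OF that(1)] _ r(1)] notC by blast+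
    then show ?thesis using True gf by (simp add: th_def th'_def)
  qed (simp add: th_def th'_def)
  have prop1: "\<forall>y\<in>N. th y x = y"
    using Hm_c[OF r(1)] U NU gf by (auto simp: th_def c_def)
  have prop2: "\<forall>y\<in>N. \<forall>m\<in>topspace M. th y m \<in> topspace M \<and> th' y m \<in> topspace M \<and>
        th y (th' y m) = m \<and> th' y (th y m) = m \<and> (m \<notin> K \<longrightarrow> th y m = m \<and> th' y m = m)"
  proof (intro ballI conjI impI)
    fix y m assume y: "y \<in> N" and m: "m \<in> topspace M"
    show "th y m \<in> topspace M" "th' y m \<in> topspace M"
      using m gU HW KW fW y UM by (auto simp: th_def th'_def)
    show "th y (th' y m) = m"
      using gU HW KW fW y UM fg gf HmKm[OF r(1) Nok[OF y]] by (auto simp: th_def th'_def)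
    show "th' y (th y m) = m"
      using gU HW KW fW y UM fg gf KmHm[OF r(1) Nok[OF y]] by (auto simp: th_def th'_def)
    show "th y m = m" "th' y m = m" if "m \<notin> K" using th_out[OF y that] by auto
  qed
  define P where "P = prod_topology (subtopology M N) M"
  have NM: "N \<subseteq> topspace M" using NU UM by auto
  have fcN: "continuous_map (subtopology M N) euclideanreal (\<lambda>m. f m j)" for j
    using continuous_map_from_subtopology_mono[OF fcoord NU] .
  have fcU: "continuous_map (prod_topology (subtopology M N) (subtopology M U)) euclideanreal (\<lambda>p. f (snd p) j)" for j
    using continuous_map_compose[OF continuous_map_snd fcoord] by (simp add: o_def)
  have fcF: "continuous_map (prod_topology (subtopology M N) (subtopology M U)) euclideanreal (\<lambda>p. f (fst p) j)" for j
    using continuous_map_compose[OF continuous_map_fst fcN] by (simp add: o_def)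
  have cont_gen: "continuous_map P M (\<lambda>p. if snd p \<in> U then g (Q (f (fst p)) (f (snd p))) else snd p)"
    if Q1: "\<And>y v. y \<in> N \<Longrightarrow> v \<in> W' \<Longrightarrow> Q (f y) v \<in> W'"
      and Q2: "\<And>y m. y \<in> N \<Longrightarrow> m \<in> U \<Longrightarrow> m \<notin> K \<Longrightarrow> g (Q (f y) (f m)) = m"
      and Q3: "\<And>j. continuous_map (prod_topology (subtopology M N) (subtopology M U)) euclideanreal
                 (\<lambda>p. Q (f (fst p)) (f (snd p)) j)"
    for Q
  proof -
    define F where "F p = (if snd p \<in> U then g (Q (f (fst p)) (f (snd p))) else snd p)" for p
    define T where "T b = (if b then N \<times> U else N \<times> (topspace M - K))" for b
    have Tp: "topspace P = N \<times> topspace M" using NM by (simp add: P_def Int_absorb1)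
    have "continuous_map P M F"
    proof (rule pasting_lemma[where I = UNIV and T = T and f = "\<lambda>_. F"])
      fix b :: bool
      have oN: "openin (subtopology M N) N" using NM by (simp add: openin_subtopology_refl)
      have oK: "openin M (topspace M - K)" using Kc by blast
      show "openin P (T b)"
        using oN oK U(1) by (auto simp: T_def P_def openin_prod_Times_iff)
      show "continuous_map (subtopology P (T b)) M F"
      proof (cases b)
        case True
        have sub: "subtopology P (T b) = prod_topology (subtopology M N) (subtopology M U)"
          using True by (simp add: P_def T_def subtopology_Times subtopology_subtopology)
        have c1: "continuous_map (prod_topology (subtopology M N) (subtopology M U)) (subtopology (Euclidean_space n) W')
                   (\<lambda>p. Q (f (fst p)) (f (snd p)))"
        proof -
          have "continuous_map (prod_topology (subtopology M N) (subtopology M U)) (powertop_real UNIV)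
                   (\<lambda>p. Q (f (fst p)) (f (snd p)))"
            using Q3 by (simp add: continuous_map_componentwise_UNIV)
          moreover have "Q (f (fst p)) (f (snd p)) \<in> W'"
            if "p \<in> topspace (prod_topology (subtopology M N) (subtopology M U))" for p
            using that Q1 fW by auto
          ultimately show ?thesis using W'E
            by (auto simp: continuous_map_in_subtopology Euclidean_space_def subtopology_subtopology En_def
                  topspace_Euclidean_space Int_absorb1)
        qed
        have c2: "continuous_map (prod_topology (subtopology M N) (subtopology M U)) M
                   (\<lambda>p. g (Q (f (fst p)) (f (snd p))))"
          using continuous_map_into_fulltopology[OF continuous_map_compose[OF c1 gc]] by (simp add: o_def)
        show ?thesis unfolding sub
          by (rule continuous_map_eq[OF c2]) (auto simp: F_def)
      next
        case False
        have "continuous_map (subtopology P (T b)) M snd"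
          by (rule continuous_map_from_subtopology) (simp add: P_def continuous_map_snd)
        then show ?thesis
          by (rule continuous_map_eq) (use False Q2 in \<open>auto simp: F_def T_def P_def\<close>)
      qed
    next
      fix x assume "x \<in> topspace P"
      then show "\<exists>j. j \<in> UNIV \<and> x \<in> T j \<and> F x = F x" using Tp KU by (auto simp: T_def)
    qed auto
    then show ?thesis by (simp add: F_def[abs_def])
  qed
  have ct: "continuous_map P M (\<lambda>p. th (fst p) (snd p))"
    unfolding th_def
  proof (rule cont_gen)
    show "\<And>j. continuous_map (prod_topology (subtopology M N) (subtopology M U)) euclideanreal
                 (\<lambda>p. Hm n c r (f (fst p)) (f (snd p)) j)"
      by (rule cont_Hm[OF fcF fcU r(1)])
    show "g (Hm n c r (f y) (f m)) = m" if "y \<in> N" "m \<in> U" "m \<notin> K" for y m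
      using th_out[OF that(1,3)] that(2) by (simp add: th_def)
  qed (use HW in auto)
  have ct': "continuous_map P M (\<lambda>p. th' (fst p) (snd p))"
    unfolding th'_def
  proof (rule cont_gen)
    show "\<And>j. continuous_map (prod_topology (subtopology M N) (subtopology M U)) euclideanreal
                 (\<lambda>p. Km n c r (f (fst p)) (f (snd p)) j)"
      by (rule cont_Km[OF fcF fcU _ r(1)]) (use Nok in auto)
    show "g (Km n c r (f y) (f m)) = m" if "y \<in> N" "m \<in> U" "m \<notin> K" for y m
      using th_out[OF that(1,3)] that(2) by (simp add: th'_def)
  qed (use KW in auto)
  have "good_family M x G N K th th'"
    unfolding good_family_def using Nopen xN Kc KG xK prop1 prop2 ct ct' by (simp add: P_def)
  then show ?thesis by blast
qed


lemma gf_K: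
  assumes "good_family M x G N K th th'" "y \<in> N" "m \<in> topspace M" "m \<in> K"
  shows "th y m \<in> K \<and> th' y m \<in> K"
proof -
  have P: "\<forall>m\<in>topspace M. th y m \<in> topspace M \<and> th' y m \<in> topspace M \<and>
        th y (th' y m) = m \<and> th' y (th y m) = m \<and> (m \<notin> K \<longrightarrow> th y m = m \<and> th' y m = m)"
    using assms(1,2) unfolding good_family_def by blast
  show ?thesis
  proof (rule conjI; rule ccontr)
    assume a: "th y m \<notin> K"
    then have "th' y (th y m) = th y m" using P assms(3) by blast
    moreover have "th' y (th y m) = m" using P assms(3) by blast
    ultimately show False using assms(4) a by simp
  next
    assume a: "th' y m \<notin> K"
    then have "th y (th' y m) = th' y m" using P assms(3) by blast
    moreover have "th y (th' y m) = m" using P assms(3) by blast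
    ultimately show False using assms(4) a by simp
  qed
qed

lemma disjoint_nbhds:
  assumes H: "Hausdorff_space M" and fin: "finite W" and bM: "\<And>w. w \<in> W \<Longrightarrow> b w \<in> topspace M"
    and inj: "inj_on b W"
  shows "\<exists>G. \<forall>w\<in>W. openin M (G w) \<and> b w \<in> G w \<and> (\<forall>w'\<in>W. w' \<noteq> w \<longrightarrow> G w \<inter> G w' = {})"
proof -
  define Pr where "Pr u v AB \<longleftrightarrow> openin M (fst AB) \<and> openin M (snd AB) \<and> b u \<in> fst AB \<and> b v \<in> snd AB \<and> fst AB \<inter> snd AB = {}" for u v AB
  define S where "S u v = (SOME AB. Pr u v AB)" for u v
  have S: "Pr u v (S u v)" if "u \<in> W" "v \<in> W" "u \<noteq> v" for u v
  proof -
    have "b u \<noteq> b v" using inj that by (auto dest: inj_onD)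
    moreover have "b u \<in> topspace M" "b v \<in> topspace M" using bM that by auto
    ultimately have "\<exists>A B. openin M A \<and> openin M B \<and> b u \<in> A \<and> b v \<in> B \<and> disjnt A B"
      using H unfolding Hausdorff_space_def by blast
    then obtain A B where "openin M A" "openin M B" "b u \<in> A" "b v \<in> B" "disjnt A B"
      by blast
    then have "Pr u v (A, B)" by (simp add: Pr_def disjnt_def)
    then show ?thesis unfolding S_def by (rule someI)
  qed
  define G where "G w = (\<Inter>w' \<in> W - {w}. fst (S w w') \<inter> snd (S w' w)) \<inter> topspace M" for w
  have "openin M (G w) \<and> b w \<in> G w \<and> (\<forall>w'\<in>W. w' \<noteq> w \<longrightarrow> G w \<inter> G w' = {})" if w: "w \<in> W" for w
  proof (intro conjI ballI impI)
    show "openin M (G w)" unfolding G_def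
      using fin S w by (intro openin_INT) (auto simp: Pr_def)
    show "b w \<in> G w" using S w bM by (auto simp: G_def Pr_def)
    fix w' assume "w' \<in> W" "w' \<noteq> w"
    have "G w \<subseteq> fst (S w w')" "G w' \<subseteq> snd (S w w')" using \<open>w' \<in> W\<close> \<open>w' \<noteq> w\<close> w by (auto simp: G_def)
    moreover have "fst (S w w') \<inter> snd (S w w') = {}" using S[OF w \<open>w' \<in> W\<close>] \<open>w' \<noteq> w\<close> by (simp add: Pr_def)
    ultimately show "G w \<inter> G w' = {}" by blast
  qed
  then show ?thesis by blast
qed

definition comb :: "'v set \<Rightarrow> ('v \<Rightarrow> 'a set) \<Rightarrow> ('v \<Rightarrow> 'a \<Rightarrow> 'a \<Rightarrow> 'a) \<Rightarrow> ('v \<Rightarrow> 'a) \<Rightarrow> 'a \<Rightarrow> 'a" where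
  "comb W K T y m = (if \<exists>w\<in>W. m \<in> K w then T (SOME w. w \<in> W \<and> m \<in> K w) (y (SOME w. w \<in> W \<and> m \<in> K w)) m else m)"

lemma comb_in:
  assumes disj: "\<And>w w'. w \<in> W \<Longrightarrow> w' \<in> W \<Longrightarrow> w \<noteq> w' \<Longrightarrow> K w \<inter> K w' = {}"
    and "w \<in> W" "m \<in> K w"
  shows "comb W K T y m = T w (y w) m"
proof -
  have "(SOME w. w \<in> W \<and> m \<in> K w) = w"
    using assms by (intro some_equality) blast+
  then show ?thesis using assms by (auto simp: comb_def)
qed

lemma comb_out: "(\<And>w. w \<in> W \<Longrightarrow> m \<notin> K w) \<Longrightarrow> comb W K T y m = m"
  by (auto simp: comb_def)

lemma comb_cont:
  fixes Y :: "('v \<Rightarrow> 'a) topology"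
  assumes fin: "finite W" and Kc: "\<And>w. w \<in> W \<Longrightarrow> closedin M (K w)"
    and disj: "\<And>w w'. w \<in> W \<Longrightarrow> w' \<in> W \<Longrightarrow> w \<noteq> w' \<Longrightarrow> K w \<inter> K w' = {}"
    and Tc: "\<And>w. w \<in> W \<Longrightarrow> continuous_map (prod_topology (subtopology M (N w)) M) M (\<lambda>p. T w (fst p) (snd p))"
    and Tout: "\<And>w y m. w \<in> W \<Longrightarrow> y \<in> N w \<Longrightarrow> m \<in> topspace M \<Longrightarrow> m \<notin> K w \<Longrightarrow> T w y m = m"
    and Yc: "\<And>w. w \<in> W \<Longrightarrow> continuous_map Y (subtopology M (N w)) (\<lambda>y. y w)"
  shows "continuous_map (prod_topology Y M) M (\<lambda>p. comb W K T (fst p) (snd p))"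
proof -
  define F where "F = (\<lambda>p. comb W K T (fst p) (snd p))"
  define TS where "TS i = (case i of None \<Rightarrow> topspace Y \<times> (topspace M - \<Union>(K ` W))
                   | Some w \<Rightarrow> topspace Y \<times> (topspace M - \<Union>(K ` (W - {w}))))" for i
  have "continuous_map (prod_topology Y M) M F"
  proof (rule pasting_lemma[where I = "insert None (Some ` W)" and T = TS and f = "\<lambda>_. F"])
    fix i assume i: "i \<in> insert None (Some ` W)"
    have cl1: "closedin M (\<Union>(K ` W))" using fin Kc by (intro closedin_Union) auto
    have cl2: "closedin M (\<Union>(K ` (W - {w})))" for w using fin Kc by (intro closedin_Union) auto
    show "openin (prod_topology Y M) (TS i)"
      using i cl1 cl2 by (auto simp: TS_def openin_prod_Times_iff openin_diff)
    show "continuous_map (subtopology (prod_topology Y M) (TS i)) M F"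
    proof (cases i)
      case None
      have "continuous_map (subtopology (prod_topology Y M) (TS i)) M snd"
        by (rule continuous_map_from_subtopology) (simp add: continuous_map_snd)
      then show ?thesis
        by (rule continuous_map_eq) (use None in \<open>auto simp: F_def TS_def intro!: comb_out[symmetric]\<close>)
    next
      case (Some w)
      then have w: "w \<in> W" using i by auto
      have c1: "continuous_map (prod_topology Y M) (prod_topology (subtopology M (N w)) M) (\<lambda>p. (fst p w, snd p))"
        unfolding continuous_map_paired
        using continuous_map_compose[OF continuous_map_fst Yc[OF w]] by (simp add: o_def continuous_map_snd)
      have c2: "continuous_map (prod_topology Y M) M (\<lambda>p. T w (fst p w) (snd p))"
        using continuous_map_compose[OF c1 Tc[OF w]] by (simp add: o_def)
      have Nw: "y w \<in> N w" if "y \<in> topspace Y" for y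
        using continuous_map_image_subset_topspace[OF Yc[OF w]] that by auto
      show ?thesis
      proof (rule continuous_map_eq[OF continuous_map_from_subtopology[OF c2]])
        fix p assume p: "p \<in> topspace (subtopology (prod_topology Y M) (TS i))"
        then have p1: "fst p \<in> topspace Y" "snd p \<in> topspace M" "\<And>w'. w' \<in> W \<Longrightarrow> w' \<noteq> w \<Longrightarrow> snd p \<notin> K w'"
          using Some by (auto simp: TS_def)
        show "T w (fst p w) (snd p) = F p"
        proof (cases "snd p \<in> K w")
          case True
          have "comb W K T (fst p) (snd p) = T w (fst p w) (snd p)"
            by (rule comb_in) (use disj w True in auto)
          then show ?thesis by (simp add: F_def)
        next
          case False
          then have "F p = snd p" using p1 by (auto simp: F_def intro!: comb_out)
          then show ?thesis using Tout[OF w Nw[OF p1(1)] p1(2) False] by simp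
        qed
      qed
    qed
  next
    fix p assume p: "p \<in> topspace (prod_topology Y M)"
    show "\<exists>j. j \<in> insert None (Some ` W) \<and> p \<in> TS j \<and> F p = F p"
    proof (cases "\<exists>w\<in>W. snd p \<in> K w")
      case True
      then obtain w where w: "w \<in> W" "snd p \<in> K w" by blast
      then have "p \<in> TS (Some w)" using p disj by (auto simp: TS_def) blast
      then show ?thesis using w by blast
    next
      case False
      then have "p \<in> TS None" using p by (auto simp: TS_def)
      then show ?thesis by blast
    qed
  qed auto
  then show ?thesis by (simp add: F_def)
qed


lemma manifold_family:
  assumes "topological_manifold M" "x \<in> topspace M" "openin M G" "x \<in> G"
  shows "\<exists>N K th th'. good_family M x G N K th th'"
proof -
  have H: "Hausdorff_space M" using assms(1) by (simp add: topological_manifold_def)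
  obtain n where ch: "\<forall>x\<in>topspace M. \<exists>U. openin M U \<and> x \<in> U \<and>
        (\<exists>W. openin (Euclidean_space n) W \<and>
             subtopology M U homeomorphic_space subtopology (Euclidean_space n) W)"
    using assms(1) by (auto simp: topological_manifold_def)
  then obtain U W' where U: "openin M U" "x \<in> U" "openin (Euclidean_space n) W'"
      "subtopology M U homeomorphic_space subtopology (Euclidean_space n) W'"
    using assms(2) by blast
  then obtain f g where "homeomorphic_maps (subtopology M U) (subtopology (Euclidean_space n) W') f g"
    by (auto simp: homeomorphic_space_def)
  then show ?thesis using key_family[OF H assms(3,4) U(1,2,3)] by blast
qed

lemma restrict_restrict_sub: "W \<subseteq> V \<Longrightarrow> restrict (restrict f V) W = restrict f W"
  by (auto simp: restrict_def fun_eq_iff)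

theorem corollary11p4:
  fixes M :: "'a topology" and V W :: "'v set" and E F :: "'v set set"
  assumes "topological_manifold M" and "connected_space M"
    and "simple_graph V E"
    and "complete_subgraph W F V E"
  shows "locally_trivial_bundle (Conf V E M) (Conf W F M) (\<lambda>x. restrict x W)"
proof -
  have H: "Hausdorff_space M" using assms(1) by (simp add: topological_manifold_def)
  have finV: "finite V" using assms(3) by (simp add: simple_graph_def)
  have EV: "u \<in> V \<and> v \<in> V" if "{u, v} \<in> E" for u v
  proof -
    have sub: "E \<subseteq> {{u, v} | u v. u \<in> V \<and> v \<in> V \<and> u \<noteq> v}"
      using assms(3) unfolding simple_graph_def by (rule conjunct2)
    have "{u, v} \<in> {{u, v} | u v. u \<in> V \<and> v \<in> V \<and> u \<noteq> v}"
      using sub that by (rule subsetD)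
    then obtain a b where eq: "{u, v} = {a, b}" and ab: "a \<in> V" "b \<in> V"
      unfolding mem_Collect_eq by blast
    have "u \<in> {a, b}" "v \<in> {a, b}" by (simp_all flip: eq)
    then show ?thesis using ab by auto
  qed
  have WV: "W \<subseteq> V" and FE: "F \<subseteq> E" and FW: "\<And>e. e \<in> F \<Longrightarrow> e \<subseteq> W"
    and Wc: "\<And>u v. u \<in> W \<Longrightarrow> v \<in> W \<Longrightarrow> u \<noteq> v \<Longrightarrow> {u, v} \<in> F"
    using assms(4) by (auto simp: complete_subgraph_def subgraph_def)
  have finW: "finite W" using finV WV finite_subset by blast
  define PV where "PV = product_topology (\<lambda>_::'v. M) V"
  define SE where "SE = {x \<in> topspace PV. \<forall>u v. {u, v} \<in> E \<longrightarrow> x u \<noteq> x v}"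
  define PW where "PW = product_topology (\<lambda>_::'v. M) W"
  define SF where "SF = {x \<in> topspace PW. \<forall>u v. {u, v} \<in> F \<longrightarrow> x u \<noteq> x v}"
  define Et where "Et = Conf V E M"
  define B where "B = Conf W F M"
  define p where "p = (\<lambda>x::'v\<Rightarrow>'a. restrict x W)"
  have Et_eq: "Et = subtopology PV SE" by (simp add: Et_def Conf_def PV_def SE_def)
  have B_eq: "B = subtopology PW SF" by (simp add: B_def Conf_def PW_def SF_def)
  have SE_sub: "SE \<subseteq> topspace PV" by (auto simp: SE_def)
  have SF_sub: "SF \<subseteq> topspace PW" by (auto simp: SF_def)
  have topEt: "topspace Et = SE" using SE_sub by (simp add: Et_eq Int_absorb1)
  have topB: "topspace B = SF" using SF_sub by (simp add: B_eq Int_absorb1)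
  have memSE: "x \<in> SE \<longleftrightarrow> x \<in> extensional V \<and> (\<forall>v\<in>V. x v \<in> topspace M) \<and> (\<forall>u v. {u, v} \<in> E \<longrightarrow> x u \<noteq> x v)" for x
    by (auto simp: SE_def PV_def PiE_iff)
  have memSF: "x \<in> SF \<longleftrightarrow> x \<in> extensional W \<and> (\<forall>v\<in>W. x v \<in> topspace M) \<and> (\<forall>u v. {u, v} \<in> F \<longrightarrow> x u \<noteq> x v)" for x
    by (auto simp: SF_def PW_def PiE_iff)
  have projE: "continuous_map (subtopology Et S) M (\<lambda>x. x k)" if "k \<in> V" for k S
    unfolding Et_eq PV_def
    by (intro continuous_map_from_subtopology continuous_map_product_projection that)
  have projB: "continuous_map (subtopology B S) M (\<lambda>x. x k)" if "k \<in> W" for k S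
    unfolding B_eq PW_def
    by (intro continuous_map_from_subtopology continuous_map_product_projection that)
  have p_SF: "p x \<in> SF" if "x \<in> SE" for x
  proof -
    have "p x u \<noteq> p x v" if "{u, v} \<in> F" for u v
    proof -
      have "u \<in> W" "v \<in> W" using FW[OF that] by auto
      then show ?thesis using that FE \<open>x \<in> SE\<close> by (auto simp: memSE p_def)
    qed
    then show ?thesis using that WV by (auto simp: memSF memSE p_def)
  qed
  have pcont_gen: "continuous_map (subtopology Et S) B p" for S
  proof -
    have "continuous_map (subtopology Et S) PW p"
      unfolding PW_def continuous_map_componentwise
    proof (intro conjI ballI)
      show "p ` topspace (subtopology Et S) \<subseteq> extensional W" by (auto simp: p_def)
      fix k assume "k \<in> W"
      then show "continuous_map (subtopology Et S) M (\<lambda>x. p x k)"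
        using projE[of k S] WV by (auto simp: p_def)
    qed
    moreover have "p \<in> topspace (subtopology Et S) \<rightarrow> SF" using p_SF topEt by auto
    ultimately show ?thesis by (simp add: B_eq continuous_map_in_subtopology)
  qed
  have pcont: "continuous_map Et B p"
    using pcont_gen[of "topspace Et"] by simp
  have triv: "\<exists>U. openin B U \<and> b \<in> U \<and>
        (\<exists>(Fb :: ('v \<Rightarrow> 'a) topology) \<phi>.
           homeomorphic_map (subtopology Et {e \<in> topspace Et. p e \<in> U})
                            (prod_topology (subtopology B U) Fb) \<phi> \<and>
           (\<forall>e\<in>topspace Et. p e \<in> U \<longrightarrow> fst (\<phi> e) = p e))" if bB: "b \<in> topspace B" for b
  proof -
    have bSF: "b \<in> SF" using bB topB by simp
    have bM: "\<And>w. w \<in> W \<Longrightarrow> b w \<in> topspace M" using bSF by (simp add: memSF)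
    have bext: "b \<in> extensional W" using bSF by (simp add: memSF)
    have injb: "inj_on b W"
      using bSF Wc by (force simp: memSF inj_on_def)
    obtain G where G: "\<And>w. w \<in> W \<Longrightarrow> openin M (G w) \<and> b w \<in> G w \<and> (\<forall>w'\<in>W. w' \<noteq> w \<longrightarrow> G w \<inter> G w' = {})"
      using disjoint_nbhds[OF H finW bM injb] by blast
    have "\<forall>w\<in>W. \<exists>N K th th'. good_family M (b w) (G w) N K th th'"
      using manifold_family[OF assms(1)] bM G by blast
    then have "\<exists>Nf. \<forall>w\<in>W. \<exists>K th th'. good_family M (b w) (G w) (Nf w) K th th'" by (rule bchoice)
    then obtain Nf where "\<forall>w\<in>W. \<exists>K th th'. good_family M (b w) (G w) (Nf w) K th th'" by blast
    then have "\<exists>Kf. \<forall>w\<in>W. \<exists>th th'. good_family M (b w) (G w) (Nf w) (Kf w) th th'" by (rule bchoice)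
    then obtain Kf where "\<forall>w\<in>W. \<exists>th th'. good_family M (b w) (G w) (Nf w) (Kf w) th th'" by blast
    then have "\<exists>T. \<forall>w\<in>W. \<exists>th'. good_family M (b w) (G w) (Nf w) (Kf w) (T w) th'" by (rule bchoice)
    then obtain T where "\<forall>w\<in>W. \<exists>th'. good_family M (b w) (G w) (Nf w) (Kf w) (T w) th'" by blast
    then have "\<exists>T'. \<forall>w\<in>W. good_family M (b w) (G w) (Nf w) (Kf w) (T w) (T' w)" by (rule bchoice)
    then obtain T' where gfw: "\<And>w. w \<in> W \<Longrightarrow> good_family M (b w) (G w) (Nf w) (Kf w) (T w) (T' w)" by blast
    have Kdisj: "Kf w \<inter> Kf w' = {}" if "w \<in> W" "w' \<in> W" "w \<noteq> w'" for w w'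
    proof -
      have "Kf w \<subseteq> G w" "Kf w' \<subseteq> G w'" using gfw that by (auto simp: good_family_def)
      then show ?thesis using G that by blast
    qed
    have Nopen: "openin M (Nf w)" and bN: "b w \<in> Nf w" and Kcl: "closedin M (Kf w)" and bK: "b w \<in> Kf w"
      and Tb: "\<And>y. y \<in> Nf w \<Longrightarrow> T w y (b w) = y"
      and Tprops: "\<And>y m. y \<in> Nf w \<Longrightarrow> m \<in> topspace M \<Longrightarrow> T w y m \<in> topspace M \<and> T' w y m \<in> topspace M \<and>
        T w y (T' w y m) = m \<and> T' w y (T w y m) = m \<and> (m \<notin> Kf w \<longrightarrow> T w y m = m \<and> T' w y m = m)"
      and Tc: "continuous_map (prod_topology (subtopology M (Nf w)) M) M (\<lambda>p. T w (fst p) (snd p))"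
      and T'c: "continuous_map (prod_topology (subtopology M (Nf w)) M) M (\<lambda>p. T' w (fst p) (snd p))"
      if "w \<in> W" for w
      using gfw[OF that] unfolding good_family_def by blast+
    have combK: "comb W Kf TT y m = TT w (y w) m" if "w \<in> W" "m \<in> Kf w" for TT y w m
      using comb_in[of W Kf w m TT y] Kdisj that by blast
    define U where "U = SF \<inter> PiE W Nf"
    have Uopen: "openin B U"
    proof -
      have "openin PW (PiE W Nf)"
        unfolding PW_def openin_PiE_gen using finW Nopen by auto
      then have "openin B (SF \<inter> PiE W Nf)"
        unfolding B_eq by (rule openin_subtopology_Int2)
      then show ?thesis by (simp add: U_def)
    qed
    have bU: "b \<in> U" using bSF bext bN by (auto simp: U_def PiE_iff)
    have US: "U \<subseteq> SF" by (auto simp: U_def)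
    have yN: "y w \<in> Nf w" if "y \<in> U" "w \<in> W" for y w using that by (auto simp: U_def)
    define Th where "Th = comb W Kf T"
    define Th' where "Th' = comb W Kf T'"
    have Th_top: "Th y m \<in> topspace M \<and> Th' y m \<in> topspace M" if "y \<in> U" "m \<in> topspace M" for y m
    proof (cases "\<exists>w\<in>W. m \<in> Kf w")
      case True
      then obtain w where w: "w \<in> W" "m \<in> Kf w" by blast
      then have "Th y m = T w (y w) m" "Th' y m = T' w (y w) m"
        unfolding Th_def Th'_def by (auto intro!: combK)
      then show ?thesis using Tprops[OF w(1) yN[OF that(1) w(1)] that(2)] by simp
    next
      case False
      then show ?thesis using that by (simp add: Th_def Th'_def comb_out)
    qed
    have Th_inv: "Th y (Th' y m) = m \<and> Th' y (Th y m) = m" if "y \<in> U" "m \<in> topspace M" for y m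
    proof (cases "\<exists>w\<in>W. m \<in> Kf w")
      case True
      then obtain w where w: "w \<in> W" "m \<in> Kf w" by blast
      have yw: "y w \<in> Nf w" using yN that w by blast
      have K2: "T w (y w) m \<in> Kf w \<and> T' w (y w) m \<in> Kf w"
        using gf_K[OF gfw[OF w(1)] yw that(2) w(2)] .
      have "Th y m = T w (y w) m" "Th' y m = T' w (y w) m"
        unfolding Th_def Th'_def using w by (auto intro!: combK)
      moreover have "Th y (T' w (y w) m) = T w (y w) (T' w (y w) m)"
        "Th' y (T w (y w) m) = T' w (y w) (T w (y w) m)"
        unfolding Th_def Th'_def using w K2 by (auto intro!: combK)
      ultimately show ?thesis using Tprops[OF w(1) yw that(2)] by simp
    next
      case False
      then show ?thesis using that by (simp add: Th_def Th'_def comb_out)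
    qed
    have Th_b: "Th y (b w) = y w" if "y \<in> U" "w \<in> W" for y w
    proof -
      have "Th y (b w) = T w (y w) (b w)"
        unfolding Th_def using that bK by (auto intro!: combK)
      then show ?thesis using Tb[OF that(2) yN[OF that]] by simp
    qed
    have Th'_y: "Th' y (y w) = b w" if "y \<in> U" "w \<in> W" for y w
      using Th_inv[OF that(1) bM[OF that(2)]] Th_b[OF that] by simp
    have Yc: "continuous_map (subtopology B U) (subtopology M (Nf w)) (\<lambda>y. y w)" if "w \<in> W" for w
      using projB[OF that, of U] yN that by (auto simp: continuous_map_in_subtopology topB)
    have Th_cont: "continuous_map (prod_topology (subtopology B U) M) M (\<lambda>q. Th (fst q) (snd q))"
      unfolding Th_def
      by (rule comb_cont[OF finW Kcl Kdisj Tc _ Yc]) (use Tprops in auto)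
    have Th'_cont: "continuous_map (prod_topology (subtopology B U) M) M (\<lambda>q. Th' (fst q) (snd q))"
      unfolding Th'_def
      by (rule comb_cont[OF finW Kcl Kdisj T'c _ Yc]) (use Tprops in auto)
    define Sb where "Sb = {e \<in> topspace Et. p e = b}"
    define SU where "SU = {e \<in> topspace Et. p e \<in> U}"
    define Fb where "Fb = subtopology Et Sb"
    define D where "D = subtopology Et SU"
    define Tg where "Tg = prod_topology (subtopology B U) Fb"
    define \<phi> where "\<phi> e = (p e, restrict (\<lambda>v. Th' (p e) (e v)) V)" for e
    define \<psi> where "\<psi> q = restrict (\<lambda>v. Th (fst q) (snd q v)) V" for q
    have SbSE: "Sb \<subseteq> SE" and SUSE: "SU \<subseteq> SE" by (auto simp: Sb_def SU_def topEt)
    have topD: "topspace D = SU" using SUSE by (simp add: D_def topEt Int_absorb1)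
    have topFb: "topspace Fb = Sb" using SbSE by (simp add: Fb_def topEt Int_absorb1)
    have UB: "U \<subseteq> topspace B" using US topB by simp
    have topTg: "topspace Tg = U \<times> Sb" using UB by (simp add: Tg_def topFb Int_absorb1)
    have pU: "p e \<in> U" if "e \<in> SU" for e using that by (simp add: SU_def)
    have eSE: "e \<in> SE" if "e \<in> SU" for e using that SUSE by auto
    have pW: "p e w = e w" if "w \<in> W" for e w using that by (simp add: p_def)
    have phi_in: "\<phi> e \<in> U \<times> Sb" if e: "e \<in> SU" for e
    proof -
      have y: "p e \<in> U" using pU[OF e] .
      have eM: "\<forall>v\<in>V. e v \<in> topspace M" and eE: "\<forall>u v. {u, v} \<in> E \<longrightarrow> e u \<noteq> e v"
        using eSE[OF e] by (auto simp: memSE)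
      have z: "restrict (\<lambda>v. Th' (p e) (e v)) V \<in> SE"
        unfolding memSE
      proof (intro conjI allI impI ballI)
        show "restrict (\<lambda>v. Th' (p e) (e v)) V \<in> extensional V" by simp
        show "restrict (\<lambda>v. Th' (p e) (e v)) V v \<in> topspace M" if "v \<in> V" for v
          using Th_top[OF y] eM that by simp
        fix u v assume uv: "{u, v} \<in> E"
        have uvV: "u \<in> V" "v \<in> V" using EV[OF uv] by auto
        show "restrict (\<lambda>v. Th' (p e) (e v)) V u \<noteq> restrict (\<lambda>v. Th' (p e) (e v)) V v"
        proof
          assume "restrict (\<lambda>v. Th' (p e) (e v)) V u = restrict (\<lambda>v. Th' (p e) (e v)) V v"
          then have "Th' (p e) (e u) = Th' (p e) (e v)" using uvV by simp
          then have "Th (p e) (Th' (p e) (e u)) = Th (p e) (Th' (p e) (e v))" by simp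
          then have "e u = e v" using Th_inv[OF y] eM uvV by simp
          then show False using eE uv by blast
        qed
      qed
      have pz: "p (restrict (\<lambda>v. Th' (p e) (e v)) V) = b"
      proof
        fix w
        show "p (restrict (\<lambda>v. Th' (p e) (e v)) V) w = b w"
        proof (cases "w \<in> W")
          case True
          then have "p (restrict (\<lambda>v. Th' (p e) (e v)) V) w = Th' (p e) (p e w)"
            using WV pW by auto
          then show ?thesis using Th'_y[OF y True] by simp
        next
          case False
          then show ?thesis using bext by (simp add: p_def extensional_def)
        qed
      qed
      show ?thesis using y z pz by (simp add: \<phi>_def Sb_def topEt)
    qed
    have ppsi: "p (\<psi> (y, z)) = y" if yz: "y \<in> U" "z \<in> Sb" for y z
    proof
      fix w
      show "p (\<psi> (y, z)) w = y w"
      proof (cases "w \<in> W")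
        case True
        have "p z = b" using yz(2) by (simp add: Sb_def)
        then have "z w = b w" using pW[OF True, of z] by simp
        then have "p (\<psi> (y, z)) w = Th y (b w)" using True WV by (auto simp: \<psi>_def p_def)
        then show ?thesis using Th_b[OF yz(1) True] by simp
      next
        case False
        have "y \<in> extensional W" using yz(1) US by (auto simp: memSF)
        then show ?thesis using False by (simp add: p_def extensional_def)
      qed
    qed
    have psi_in: "\<psi> q \<in> SU" if q: "q \<in> U \<times> Sb" for q
    proof -
      obtain y z where yz: "q = (y, z)" "y \<in> U" "z \<in> Sb" using q by auto
      have zM: "\<forall>v\<in>V. z v \<in> topspace M" and zE: "\<forall>u v. {u, v} \<in> E \<longrightarrow> z u \<noteq> z v"
        and pz: "p z = b"
        using yz SbSE by (auto simp: memSE Sb_def)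
      have s: "\<psi> q \<in> SE"
        unfolding memSE
      proof (intro conjI allI impI ballI)
        show "\<psi> q \<in> extensional V" by (simp add: \<psi>_def)
        show "\<psi> q v \<in> topspace M" if "v \<in> V" for v
          using Th_top[OF yz(2)] zM that yz by (simp add: \<psi>_def)
        fix u v assume uv: "{u, v} \<in> E"
        have uvV: "u \<in> V" "v \<in> V" using EV[OF uv] by auto
        show "\<psi> q u \<noteq> \<psi> q v"
        proof
          assume "\<psi> q u = \<psi> q v"
          then have "Th y (z u) = Th y (z v)" using uvV yz by (simp add: \<psi>_def)
          then have "Th' y (Th y (z u)) = Th' y (Th y (z v))" by simp
          then have "z u = z v" using Th_inv[OF yz(2)] zM uvV by simp
          then show False using zE uv by blast
        qed
      qed
      have "p (\<psi> q) = y" using ppsi yz by simp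
      then show ?thesis using s yz(2) by (simp add: SU_def topEt)
    qed
    have psiphi: "\<psi> (\<phi> e) = e" if e: "e \<in> SU" for e
    proof -
      have y: "p e \<in> U" using pU[OF e] .
      have eM: "\<forall>v\<in>V. e v \<in> topspace M" and ext: "e \<in> extensional V"
        using eSE[OF e] by (auto simp: memSE)
      show ?thesis
      proof
        fix v show "\<psi> (\<phi> e) v = e v"
          using Th_inv[OF y] eM ext by (cases "v \<in> V") (auto simp: \<psi>_def \<phi>_def extensional_def)
      qed
    qed
    have phipsi: "\<phi> (\<psi> q) = q" if q: "q \<in> U \<times> Sb" for q
    proof -
      obtain y z where yz: "q = (y, z)" "y \<in> U" "z \<in> Sb" using q by auto
      have zM: "\<forall>v\<in>V. z v \<in> topspace M" and ext: "z \<in> extensional V"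
        using yz SbSE by (auto simp: memSE)
      have py: "p (\<psi> q) = y" using ppsi yz by simp
      have "restrict (\<lambda>v. Th' y (\<psi> q v)) V = z"
      proof
        fix v show "restrict (\<lambda>v. Th' y (\<psi> q v)) V v = z v"
          using Th_inv[OF yz(2)] zM ext yz by (cases "v \<in> V") (auto simp: \<psi>_def extensional_def)
      qed
      then show ?thesis using py yz by (simp add: \<phi>_def)
    qed
    have pD: "continuous_map D (subtopology B U) p"
      using pcont_gen[of SU] pU by (auto simp: D_def continuous_map_in_subtopology topD)
    have projD: "continuous_map D M (\<lambda>e. e k)" if "k \<in> V" for k
      using projE[OF that] by (simp add: D_def)
    have projFb: "continuous_map Fb M (\<lambda>e. e k)" if "k \<in> V" for k
      using projE[OF that] by (simp add: Fb_def)
    have Et_sub: "subtopology Et S = subtopology PV (SE \<inter> S)" for S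
      by (simp add: Et_eq subtopology_subtopology)
    have phic: "continuous_map D Tg \<phi>"
      unfolding Tg_def \<phi>_def continuous_map_paired
    proof (intro conjI pD)
      have "continuous_map D PV (\<lambda>e. restrict (\<lambda>v. Th' (p e) (e v)) V)"
        unfolding PV_def continuous_map_componentwise
      proof (intro conjI ballI)
        show "(\<lambda>e. restrict (\<lambda>v. Th' (p e) (e v)) V) ` topspace D \<subseteq> extensional V" by auto
        fix k assume k: "k \<in> V"
        have c1: "continuous_map D (prod_topology (subtopology B U) M) (\<lambda>e. (p e, e k))"
          unfolding continuous_map_paired using pD projD[OF k] by simp
        have "continuous_map D M (\<lambda>e. Th' (p e) (e k))"
          using continuous_map_compose[OF c1 Th'_cont] by (simp add: o_def)
        then show "continuous_map D M (\<lambda>e. restrict (\<lambda>v. Th' (p e) (e v)) V k)"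
          using k by simp
      qed
      moreover have "restrict (\<lambda>v. Th' (p e) (e v)) V \<in> SE \<inter> Sb" if "e \<in> topspace D" for e
        using phi_in[of e] that topD SbSE by (auto simp: \<phi>_def)
      ultimately show "continuous_map D Fb (\<lambda>e. restrict (\<lambda>v. Th' (p e) (e v)) V)"
        unfolding Fb_def Et_sub continuous_map_in_subtopology by blast
    qed
    have psic: "continuous_map Tg D \<psi>"
    proof -
      have "continuous_map Tg PV \<psi>"
        unfolding PV_def continuous_map_componentwise
      proof (intro conjI ballI)
        show "\<psi> ` topspace Tg \<subseteq> extensional V" by (auto simp: \<psi>_def)
        fix k assume k: "k \<in> V"
        have c1: "continuous_map Tg (prod_topology (subtopology B U) M) (\<lambda>q. (fst q, snd q k))"
          unfolding continuous_map_paired Tg_def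
          using continuous_map_compose[OF continuous_map_snd projFb[OF k]]
          by (simp add: o_def continuous_map_fst)
        have "continuous_map Tg M (\<lambda>q. Th (fst q) (snd q k))"
          using continuous_map_compose[OF c1 Th_cont] by (simp add: o_def)
        then show "continuous_map Tg M (\<lambda>q. \<psi> q k)"
          using k by (simp add: \<psi>_def)
      qed
      moreover have "\<psi> q \<in> SE \<inter> SU" if "q \<in> topspace Tg" for q
        using psi_in[of q] that topTg SUSE by auto
      ultimately show ?thesis
        unfolding D_def Et_sub continuous_map_in_subtopology by blast
    qed
    have "homeomorphic_maps D Tg \<phi> \<psi>"
      unfolding homeomorphic_maps_def
      using phic psic psiphi phipsi topD topTg by auto
    then have "homeomorphic_map D Tg \<phi>"
      using homeomorphic_map_maps by blast
    moreover have "\<forall>e\<in>topspace Et. p e \<in> U \<longrightarrow> fst (\<phi> e) = p e" by (simp add: \<phi>_def)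
    ultimately show ?thesis
      using Uopen bU unfolding D_def Tg_def SU_def by blast
  qed
  show ?thesis
    unfolding locally_trivial_bundle_def
    using pcont triv by (simp add: Et_def B_def p_def)
qed

end
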